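(* Let $\Omega=\{z\in\mathbb C^{r\times(r+b)}: I_r-zz^*>0\}$ be the type-I domain of rank $r$ and fix $1\le q<r$. Let $\Omega'=\{z'\in\mathbb C^{(r-q)\times(r-q+b)}: I_{r-q}-z'z'^*>0\}$ (type-I of rank $r-q$). For $z\in\mathbb C^{r\times(r+b)}$ with singular values $t_1\ge\dots\ge t_r\ge0$, let $\Psi(z)\in\mathbb C^{(r-q)\times(r-q+b)}$ be the matrix whose $(j,j)$ entry is $t_{q+j}$ for $1\le j\le r-q$ and all other entries $0$. Let $\overline{\partial\Omega_q}=\{z\in\mathbb C^{r\times(r+b)}: t_1=\dots=t_q=1\ge t_{q+1}\}$, the closure of the $q$-th boundary component $\partial\Omega_q=\{z: t_1=\dots=t_q=1>t_{q+1}\}$. Then \[\overline{\partial\Omega_q}=\Big\{z\in\mathbb C^{r\times(r+b)}:\ \Delta^{(\ell)}_\Omega(z,z)=\sum_{i=\max(\ell-(r-q),0)}^{\min(q,\ell)}\binom{q}{i}\Delta^{(\ell-i)}_{\Omega'}\big(\Psi(z),\Psi(z)\big)\ \text{ for all }1\le\ell\le r\Big\}.\]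
   Context: For a type-I domain $\Omega_n=\{z\in\mathbb C^{n\times m}: I_n-zz^*>0\}$ of rank $n$, the Jordan triple determinant is $\Delta(z,w)=\det(I_n-zw^* )$; it satisfies $\Delta(z,z)=\prod_{j=1}^n(1-t_j^2)$ where $t_j$ are the singular values of $z$. Write $\Delta(z,w)=\sum_{\ell=0}^n(-1)^\ell\Delta^{(\ell)}(z,w)$ with $\Delta^{(\ell)}$ sesqui-analytic and homogeneous of bidegree $(\ell,\ell)$; $\Delta^{(0)}=1$. The subscripts $\Omega$, $\Omega'$ indicate which domain's $\Delta^{(\ell)}$ is meant ($\Delta^{(\ell-i)}_{\Omega'}$ with $0\le\ell-i\le r-q$). The boundary $\partial\Omega_q$ equals the orbit description $\{k(e_1+\dots+e_q+\sum_{i>q}t_ie_i)\}$ with $e_i$ the matrix units $E_{ii}$ and $k$ in the stabilizer of $0$ in the identity component of $\mathrm{Aut}(\Omega)$, $1>t_{q+1}\ge\dots\ge t_r\ge0$. *)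

theory Defs
  imports "Jordan_Normal_Form.Char_Poly"
begin

definition ctrans :: "complex mat \<Rightarrow> complex mat" where
  "ctrans w = mat (dim_col w) (dim_row w) (\<lambda>(i,j). cnj (w $$ (j,i)))"

definition jt_det :: "complex mat \<Rightarrow> complex mat \<Rightarrow> complex" where
  "jt_det z w = det (1\<^sub>m (dim_row z) - z * ctrans w)"

(* Delta^(l)(z,w): the bidegree-(l,l) homogeneous part in the expansion
   Delta(z,w) = sum_l (-1)^l Delta^(l)(z,w).  Homogeneity gives
   Delta(c z, w) = sum_l (-1)^l c^l Delta^(l)(z,w), so Delta^(l)(z,w) is
   (-1)^l times the coefficient of c^l of the polynomial c \<mapsto> Delta(c z, w). *)
definition jt_det_part :: "nat \<Rightarrow> complex mat \<Rightarrow> complex mat \<Rightarrow> complex" where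
  "jt_det_part l z w =
     (-1) ^ l * coeff (THE p. \<forall>c. poly p c = jt_det (c \<cdot>\<^sub>m z) w) l"

definition sing_vals :: "complex mat \<Rightarrow> real list" where
  "sing_vals z = (THE ts. length ts = dim_row z \<and> sorted_wrt (\<ge>) ts \<and>
      (\<forall>t\<in>set ts. 0 \<le> t) \<and>
      char_poly (z * ctrans z) = (\<Prod>t\<leftarrow>ts. [:- complex_of_real (t^2), 1:]))"

definition Psi :: "nat \<Rightarrow> nat \<Rightarrow> nat \<Rightarrow> complex mat \<Rightarrow> complex mat" where
  "Psi r b q z = mat (r - q) (r - q + b)
     (\<lambda>(i,j). if i = j then complex_of_real (sing_vals z ! (q + i)) else 0)"

end

theory Submission
  imports Defs
begin

lemma lin_prod_mset:
  fixes xs :: "'a::idom list"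
  shows "(\<Prod>x\<leftarrow>xs. [:-x,1:]) = (\<Prod>y\<leftarrow>ys. [:-y,1:]) \<Longrightarrow> mset xs = mset ys"
proof (induction xs arbitrary: ys)
  case Nil
  show ?case
  proof (cases ys)
    case (Cons y ys')
    have "poly (\<Prod>y\<leftarrow>ys. [:-y,1:]) y = 0" using Cons by (intro linear_poly_root) auto
    with Nil.prems show ?thesis by simp
  qed simp
next
  case (Cons x xs)
  have "poly (\<Prod>y\<leftarrow>ys. [:-y,1:]) x = 0"
    using linear_poly_root[of x "x#xs"] Cons.prems by (metis list.set_intros(1))
  then obtain y where y: "y \<in> set ys" "poly [:-y,1:] x = 0"
    unfolding poly_prod_list_zero_iff by auto
  hence xy: "x \<in> set ys" by simp
  have "[:-x,1:] * (\<Prod>y\<leftarrow>xs. [:-y,1:]) = [:-x,1:] * (\<Prod>y\<leftarrow>remove1 x ys. [:-y,1:])"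
    using Cons.prems prod_list_map_remove1[OF xy, of "\<lambda>y. [:-y,1:]"] by simp
  hence "(\<Prod>y\<leftarrow>xs. [:-y,1:]) = (\<Prod>y\<leftarrow>remove1 x ys. [:-y,1:])"
    by (subst (asm) mult_left_cancel) auto
  from Cons.IH[OF this] xy show ?case by simp
qed

lemma rev_factor:
  fixes xs :: "complex list"
  assumes "c \<noteq> 0"
  shows "poly (\<Prod>a\<leftarrow>xs. [:1,-a:]) c = c ^ length xs * poly (\<Prod>a\<leftarrow>xs. [:-a,1:]) (1/c)"
  using assms by (induction xs) (auto simp: field_simps)

lemma rev_eq:
  fixes xs ys :: "complex list"
  assumes "length xs = length ys"
    and "(\<Prod>a\<leftarrow>xs. [:1,-a:]) = (\<Prod>a\<leftarrow>ys. [:1,-a:])"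
  shows "(\<Prod>a\<leftarrow>xs. [:-a,1:]) = (\<Prod>a\<leftarrow>ys. [:-a,1:])"
proof (rule ccontr)
  let ?D = "(\<Prod>a\<leftarrow>xs. [:-a,1:]) - (\<Prod>a\<leftarrow>ys. [:-a,1:])"
  assume "\<not> ?thesis"
  hence "?D \<noteq> 0" by simp
  hence fin: "finite {x. poly ?D x = 0}" by (rule poly_roots_finite)
  have "UNIV - {0} \<subseteq> {x. poly ?D x = 0}"
  proof
    fix y :: complex assume "y \<in> UNIV - {0}"
    hence y: "y \<noteq> 0" by simp
    have "1/y \<noteq> 0" using y by simp
    from rev_factor[OF this, of xs] rev_factor[OF this, of ys] assms y
    show "y \<in> {x. poly ?D x = 0}" by simp
  qed
  hence "finite (UNIV - {0::complex})" using fin finite_subset by blast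
  thus False by (simp add: infinite_UNIV_char_0)
qed

lemma det_one_minus:
  fixes A :: "complex mat"
  assumes A: "A \<in> carrier_mat n n" and cp: "char_poly A = (\<Prod>a\<leftarrow>as. [:-a,1:])"
    and len: "length as = n"
  shows "det (1\<^sub>m n - c \<cdot>\<^sub>m A) = poly (\<Prod>a\<leftarrow>as. [:1,-a:]) c"
proof (cases "c = 0")
  case True
  have "1\<^sub>m n - c \<cdot>\<^sub>m A = 1\<^sub>m n" using A True by (intro eq_matI) auto
  moreover have "poly (\<Prod>a\<leftarrow>as. [:1,-a:]) 0 = 1" by (induction as) simp_all
  ultimately show ?thesis using True by simp
next
  case False
  have "1\<^sub>m n - c \<cdot>\<^sub>m A = c \<cdot>\<^sub>m (- (char_matrix A (1/c)))"
    using A False by (intro eq_matI) (auto simp: char_matrix_def field_simps)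
  hence "det (1\<^sub>m n - c \<cdot>\<^sub>m A) = c ^ n * poly (char_poly A) (1/c)"
    using A by (simp add: det_smult char_poly_matrix[OF A] char_matrix_def)
  also have "\<dots> = poly (\<Prod>a\<leftarrow>as. [:1,-a:]) c"
    using rev_factor[OF False, of as] cp len by simp
  finally show ?thesis .
qed

lemma the_poly:
  fixes P :: "complex poly"
  assumes "\<And>c. poly P c = f c"
  shows "(THE p. \<forall>c. poly p c = f c) = P"
proof (rule the_equality)
  fix p assume "\<forall>c. poly p c = f c"
  hence "poly p = poly P" using assms by auto
  thus "p = P" by (simp add: poly_eq_poly_eq_iff)
qed (use assms in auto)

lemma jt_det_part_eq:
  fixes z w :: "complex mat"
  assumes z: "z \<in> carrier_mat n m" and w: "w \<in> carrier_mat n m"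
    and cp: "char_poly (z * ctrans w) = (\<Prod>a\<leftarrow>as. [:-a,1:])"
    and len: "length as = n"
  shows "jt_det_part l z w = (-1)^l * coeff (\<Prod>a\<leftarrow>as. [:1,-a:]) l"
proof -
  have cw: "ctrans w \<in> carrier_mat m n" using w by (simp add: ctrans_def)
  have A: "z * ctrans w \<in> carrier_mat n n" using z cw by simp
  have "\<And>c. poly (\<Prod>a\<leftarrow>as. [:1,-a:]) c = jt_det (c \<cdot>\<^sub>m z) w"
    unfolding jt_det_def using z cw det_one_minus[OF A cp len]
    by (simp add: mult_smult_assoc_mat[OF z cw])
  thus ?thesis unfolding jt_det_part_def by (subst the_poly) auto
qed

lemma ctrans_carrier[simp]: "z \<in> carrier_mat n m \<Longrightarrow> ctrans z \<in> carrier_mat m n"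
  by (simp add: ctrans_def)

lemma ctrans_index[simp]: "z \<in> carrier_mat n m \<Longrightarrow> i < m \<Longrightarrow> j < n \<Longrightarrow> ctrans z $$ (i,j) = cnj (z $$ (j,i))"
  by (simp add: ctrans_def)

lemma eig_nonneg:
  fixes z :: "complex mat"
  assumes z: "z \<in> carrier_mat n m" and root: "poly (char_poly (z * ctrans z)) a = 0"
  shows "\<exists>x\<ge>0. a = complex_of_real x"
proof -
  have cz: "ctrans z \<in> carrier_mat m n" using z by simp
  have A: "z * ctrans z \<in> carrier_mat n n" using z cz by simp
  from root eigenvalue_root_char_poly[OF A] obtain v where
    ev: "eigenvector (z * ctrans z) v a" unfolding eigenvalue_def by auto
  hence v: "v \<in> carrier_vec n" and v0: "v \<noteq> 0\<^sub>v n" and Av: "(z * ctrans z) *\<^sub>v v = a \<cdot>\<^sub>v v"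
    using A unfolding eigenvector_def by auto
  define w where "w = ctrans z *\<^sub>v v"
  have w: "w \<in> carrier_vec m" using cz v unfolding w_def by simp
  have wk: "w $ k = (\<Sum>i<n. cnj (z $$ (i,k)) * v $ i)" if "k < m" for k
    using that cz v z unfolding w_def
    by (simp add: scalar_prod_def lessThan_atLeast0 ctrans_def)
  have cwk: "cnj (w $ k) = (\<Sum>i<n. z $$ (i,k) * cnj (v $ i))" if "k < m" for k
    using wk[OF that] by (simp add: cnj_sum)
  have zw: "((z * ctrans z) *\<^sub>v v) $ i = (\<Sum>k<m. z $$ (i,k) * w $ k)" if "i < n" for i
  proof -
    have "(z * ctrans z) *\<^sub>v v = z *\<^sub>v w" unfolding w_def using z cz v
      by (rule assoc_mult_mat_vec[of _ n m _ n])
    thus ?thesis using that z w by (simp add: scalar_prod_def lessThan_atLeast0)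
  qed
  have "(\<Sum>i<n. cnj (v $ i) * ((z * ctrans z) *\<^sub>v v) $ i)
      = (\<Sum>i<n. \<Sum>k<m. cnj (v $ i) * z $$ (i,k) * w $ k)"
    using zw by (simp add: sum_distrib_left mult.assoc)
  also have "\<dots> = (\<Sum>k<m. \<Sum>i<n. cnj (v $ i) * z $$ (i,k) * w $ k)"
    by (rule sum.swap)
  also have "\<dots> = (\<Sum>k<m. w $ k * cnj (w $ k))"
    using cwk by (simp add: sum_distrib_left sum_distrib_right mult_ac)
  also have "\<dots> = complex_of_real (\<Sum>k<m. (cmod (w $ k))^2)"
    by (simp only: of_real_sum complex_norm_square)
  finally have e1: "(\<Sum>i<n. cnj (v $ i) * ((z * ctrans z) *\<^sub>v v) $ i) = complex_of_real (\<Sum>k<m. (cmod (w $ k))^2)" .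
  have "(\<Sum>i<n. cnj (v $ i) * ((z * ctrans z) *\<^sub>v v) $ i) = a * (\<Sum>i<n. v $ i * cnj (v $ i))"
    using Av v by (simp add: sum_distrib_left mult_ac)
  also have "\<dots> = a * complex_of_real (\<Sum>i<n. (cmod (v $ i))^2)"
    by (simp only: of_real_sum complex_norm_square)
  finally have e2: "a * complex_of_real (\<Sum>i<n. (cmod (v $ i))^2) = complex_of_real (\<Sum>k<m. (cmod (w $ k))^2)"
    using e1 by simp
  obtain i where i: "i < n" "v $ i \<noteq> 0" using v v0 by (metis eq_vecI carrier_vecD index_zero_vec)
  have Spos: "(\<Sum>i<n. (cmod (v $ i))^2) > 0"
  proof -
    have "(cmod (v $ i))^2 \<le> (\<Sum>i<n. (cmod (v $ i))^2)"
      using i by (intro member_le_sum) auto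
    moreover have "(cmod (v $ i))^2 > 0" using i by simp
    ultimately show ?thesis by linarith
  qed
  have Tnn: "(\<Sum>k<m. (cmod (w $ k))^2) \<ge> 0" by (intro sum_nonneg) auto
  define S where "S = (\<Sum>i<n. (cmod (v $ i))^2)"
  define T where "T = (\<Sum>k<m. (cmod (w $ k))^2)"
  have e3: "a * complex_of_real S = complex_of_real T" using e2 unfolding S_def T_def .
  have "S > 0" using Spos S_def by simp
  hence S0: "complex_of_real S \<noteq> 0" by (simp only: of_real_eq_0_iff)
  have "T \<ge> 0" using Tnn T_def by simp
  have "a = complex_of_real T / complex_of_real S" using e3 S0 by (simp add: eq_divide_eq)
  hence "a = complex_of_real (T / S)" by simp
  thus ?thesis using \<open>S > 0\<close> \<open>T \<ge> 0\<close> by (intro exI[of _ "T / S"]) auto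
qed

lemma prod_list_perm: fixes f :: "'a \<Rightarrow> 'b::comm_monoid_mult" shows "mset xs = mset ys \<Longrightarrow> prod_list (map f xs) = prod_list (map f ys)"
proof -
  assume "mset xs = mset ys"
  hence "mset (map f xs) = mset (map f ys)" by simp
  hence "prod_mset (mset (map f xs)) = prod_mset (mset (map f ys))" by (rule arg_cong)
  thus ?thesis by (simp only: prod_mset_prod_list)
qed

lemma sing_vals_props:
  fixes z :: "complex mat"
  assumes z: "z \<in> carrier_mat n m"
  shows "length (sing_vals z) = n \<and> sorted_wrt (\<ge>) (sing_vals z) \<and>
      (\<forall>t\<in>set (sing_vals z). 0 \<le> t) \<and>
      char_poly (z * ctrans z) = (\<Prod>t\<leftarrow>sing_vals z. [:- complex_of_real (t^2), 1:])"
proof -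
  have A: "z * ctrans z \<in> carrier_mat n n" using z by simp
  from char_poly_factorized[OF A] obtain as where
    cp: "char_poly (z * ctrans z) = (\<Prod>a\<leftarrow>as. [:-a,1:])" and len: "length as = n" by auto
  have real: "\<exists>x\<ge>0. a = complex_of_real x" if "a \<in> set as" for a
  proof -
    have "poly (char_poly (z * ctrans z)) a = 0" using cp linear_poly_root[OF that] by simp
    from eig_nonneg[OF z this] show ?thesis .
  qed
  define g where "g = (\<lambda>a::complex. sqrt (Re a))"
  define h where "h = (\<lambda>t::real. complex_of_real (t^2))"
  define ts where "ts = rev (sort (map g as))"
  let ?P = "\<lambda>ts. length ts = dim_row z \<and> sorted_wrt (\<ge>) ts \<and>
      (\<forall>t\<in>set ts. 0 \<le> t) \<and>
      char_poly (z * ctrans z) = (\<Prod>t\<leftarrow>ts. [:- complex_of_real (t^2), 1:])"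
  have hg: "h (g a) = a" if a_in: "a \<in> set as" for a
  proof -
    obtain x where "x \<ge> 0" "a = complex_of_real x" using real[OF a_in] by blast
    thus ?thesis unfolding g_def h_def by simp
  qed
  have "(\<Prod>t\<leftarrow>ts. [:- complex_of_real (t^2), 1:]) = (\<Prod>t\<leftarrow>map g as. [:- complex_of_real (t^2), 1:])"
    unfolding ts_def by (rule prod_list_perm) simp
  also have "\<dots> = (\<Prod>a\<leftarrow>as. [:- h (g a), 1:])" unfolding h_def by (simp add: o_def)
  also have "\<dots> = (\<Prod>a\<leftarrow>as. [:-a,1:])"
    by (rule arg_cong[where f=prod_list], rule map_cong) (use hg in auto)
  finally have pe: "(\<Prod>t\<leftarrow>ts. [:- complex_of_real (t^2), 1:]) = (\<Prod>a\<leftarrow>as. [:-a,1:])" .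
  have pts: "?P ts"
  proof (intro conjI)
    show "length ts = dim_row z" using len z unfolding ts_def by simp
    show "sorted_wrt (\<ge>) ts" unfolding ts_def by (simp add: sorted_wrt_rev)
    show "\<forall>t\<in>set ts. 0 \<le> t" unfolding ts_def g_def by (auto dest!: real)
    show "char_poly (z * ctrans z) = (\<Prod>t\<leftarrow>ts. [:- complex_of_real (t^2), 1:])" using pe cp by simp
  qed
  have uniq: "ts' = ts" if "?P ts'" for ts'
  proof -
    have "(\<Prod>x\<leftarrow>map h ts'. [:-x,1:]) = (\<Prod>a\<leftarrow>as. [:-a,1:])"
      using that cp unfolding h_def by (simp add: o_def)
    hence ms: "mset (map h ts') = mset as" by (rule lin_prod_mset)
    have gh: "\<forall>t\<in>set ts'. g (h t) = t" using that by (auto simp: g_def h_def)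
    have "map g (map h ts') = ts'" unfolding map_map
      by (rule map_idI) (use gh in auto)
    hence "mset ts' = image_mset g (mset (map h ts'))" by (simp only: mset_map[symmetric])
    also have "\<dots> = mset (map g as)" using ms by simp
    finally have "mset (rev ts') = mset (map g as)" by simp
    moreover have "sorted (rev ts')" using that by (simp add: sorted_wrt_rev)
    ultimately have "sort (map g as) = rev ts'" by (rule properties_for_sort)
    thus ?thesis unfolding ts_def by simp
  qed
  have "?P (sing_vals z)" unfolding sing_vals_def by (rule theI[of ?P ts, OF pts uniq])
  thus ?thesis using z by simp
qed

lemma det_diag:
  fixes d :: "nat \<Rightarrow> 'a::comm_ring_1"
  shows "det (mat n n (\<lambda>(i,j). if i = j then d i else 0)) = prod_list (map d [0..<n])"
proof -
  have "upper_triangular (mat n n (\<lambda>(i,j). if i = j then d i else 0))"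
    unfolding upper_triangular_def by auto
  hence "det (mat n n (\<lambda>(i,j). if i = j then d i else 0)) = prod_list (diag_mat (mat n n (\<lambda>(i,j). if i = j then d i else 0)))"
    by (rule det_upper_triangular[of _ n]) simp
  also have "diag_mat (mat n n (\<lambda>(i,j). if i = j then d i else 0)) = map d [0..<n]"
    unfolding diag_mat_def by simp
  finally show ?thesis .
qed

lemma drop_as_map: "drop q xs = map (\<lambda>i. xs ! (q + i)) [0..<length xs - q]"
  by (rule nth_equalityI) auto

lemma Psi_part:
  fixes z :: "complex mat"
  assumes len: "length (sing_vals z) = r" and qr: "q \<le> r"
  shows "jt_det_part k (Psi r b q z) (Psi r b q z) =
    (-1)^k * coeff (\<Prod>a\<leftarrow>drop q (map (\<lambda>t. complex_of_real (t^2)) (sing_vals z)). [:1,-a:]) k"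
proof -
  let ?ts = "sing_vals z"
  define x where "x = (\<lambda>i. complex_of_real (?ts ! (q + i)))"
  let ?P = "Psi r b q z"
  have P: "?P \<in> carrier_mat (r-q) (r-q+b)" unfolding Psi_def by simp
  have Pij: "?P $$ (i,k) = (if i = k then x i else 0)" if "i < r - q" "k < r - q + b" for i k
    using that unfolding Psi_def x_def by simp
  have "\<And>c. poly (\<Prod>a\<leftarrow>drop q (map (\<lambda>t. complex_of_real (t^2)) ?ts). [:1,-a:]) c = jt_det (c \<cdot>\<^sub>m ?P) ?P"
  proof -
    fix c :: complex
    have cP: "ctrans ?P \<in> carrier_mat (r-q+b) (r-q)" using P by (rule ctrans_carrier)
    have PP: "(c \<cdot>\<^sub>m ?P) * ctrans ?P \<in> carrier_mat (r-q) (r-q)"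
      by (rule mult_carrier_mat[OF smult_carrier_mat[OF P] cP])
    have "1\<^sub>m (r-q) - (c \<cdot>\<^sub>m ?P) * ctrans ?P = mat (r-q) (r-q) (\<lambda>(i,j). if i = j then 1 - c * x i * cnj (x i) else 0)"
    proof (rule eq_matI)
      fix i j assume ij: "i < dim_row (mat (r-q) (r-q) (\<lambda>(i,j). if i = j then 1 - c * x i * cnj (x i) else 0))"
        "j < dim_col (mat (r-q) (r-q) (\<lambda>(i,j). if i = j then 1 - c * x i * cnj (x i) else 0))"
      hence i: "i < r - q" and j: "j < r - q" by auto
      have "((c \<cdot>\<^sub>m ?P) * ctrans ?P) $$ (i,j) = (\<Sum>k\<in>{0..<r-q+b}. (c * ?P $$ (i,k)) * cnj (?P $$ (j,k)))"
        using i j P by (simp add: scalar_prod_def ctrans_def)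
      also have "\<dots> = (\<Sum>k\<in>{0..<r-q+b}. (if k = i then c * x i * (if j = i then cnj (x j) else 0) else 0))"
        by (rule sum.cong) (use i j Pij in auto)
      also have "\<dots> = (if i = j then c * x i * cnj (x i) else 0)" using i by (auto simp add: sum.delta')
      finally have ent: "((c \<cdot>\<^sub>m ?P) * ctrans ?P) $$ (i,j) = (if i = j then c * x i * cnj (x i) else 0)" .
      show "(1\<^sub>m (r-q) - (c \<cdot>\<^sub>m ?P) * ctrans ?P) $$ (i,j) = mat (r-q) (r-q) (\<lambda>(i,j). if i = j then 1 - c * x i * cnj (x i) else 0) $$ (i,j)"
      proof -
        have "(1\<^sub>m (r-q) - (c \<cdot>\<^sub>m ?P) * ctrans ?P) $$ (i,j) = 1\<^sub>m (r-q) $$ (i,j) - ((c \<cdot>\<^sub>m ?P) * ctrans ?P) $$ (i,j)"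
          using i j PP by (intro index_minus_mat) auto
        thus ?thesis using ent i j by simp
      qed
    qed (use P PP in auto)
    hence "jt_det (c \<cdot>\<^sub>m ?P) ?P = prod_list (map (\<lambda>i. 1 - c * x i * cnj (x i)) [0..<r-q])"
      unfolding jt_det_def using P by (simp add: det_diag)
    also have "\<dots> = poly (\<Prod>a\<leftarrow>drop q (map (\<lambda>t. complex_of_real (t^2)) ?ts). [:1,-a:]) c"
      unfolding drop_as_map using len qr
      apply (simp add: poly_prod_list o_def x_def power2_eq_square algebra_simps)
      apply (intro arg_cong[where f=prod_list] map_cong)
       apply auto
      done
    finally show "poly (\<Prod>a\<leftarrow>drop q (map (\<lambda>t. complex_of_real (t^2)) ?ts). [:1,-a:]) c = jt_det (c \<cdot>\<^sub>m ?P) ?P" by simp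
  qed
  thus ?thesis unfolding jt_det_part_def by (subst the_poly) auto
qed

lemma coeff_one_minus_pow:
  "coeff ([:1,-1:]^q :: complex poly) i = of_nat (q choose i) * (-1)^i"
proof (cases "i \<le> q")
  case True
  thus ?thesis by (simp add: coeff_linear_poly_power)
next
  case False
  have "degree ([:1,-1:]^q :: complex poly) \<le> degree ([:1,-1:] :: complex poly) * q" by (rule degree_power_le)
  hence "degree ([:1,-1:]^q :: complex poly) < i" using False by simp
  hence "coeff ([:1,-1:]^q :: complex poly) i = 0" by (rule coeff_eq_0)
  thus ?thesis using False by simp
qed

lemma keyK:
  fixes Q :: "complex poly"
  assumes dQ: "degree Q \<le> m" and l: "l \<le> q + m"
  shows "(-1)^l * coeff ([:1,-1:]^q * Q) l =
    (\<Sum>i = max (l - m) 0 .. min q l. of_nat (q choose i) * ((-1)^(l-i) * coeff Q (l-i)))"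
proof -
  have "(-1)^l * coeff ([:1,-1:]^q * Q) l = (\<Sum>i\<le>l. (-1)^l * (of_nat (q choose i) * (-1)^i * coeff Q (l-i)))"
    by (simp add: coeff_mult coeff_one_minus_pow sum_distrib_left)
  also have "\<dots> = (\<Sum>i\<le>l. of_nat (q choose i) * ((-1)^(l-i) * coeff Q (l-i)))"
  proof (rule sum.cong[OF refl])
    fix i assume "i \<in> {..l}"
    hence "(-1::complex)^l = (-1)^(l-i) * (-1)^i" by (simp flip: power_add)
    hence "(-1::complex)^l * (-1)^i = (-1)^(l-i) * ((-1)^i * (-1)^i)" by simp
    also have "(-1::complex)^i * (-1)^i = 1" by (simp flip: power_add)
    finally have "(-1::complex)^l * (-1)^i = (-1)^(l-i)" by simp
    thus "(-1)^l * (of_nat (q choose i) * (-1)^i * coeff Q (l-i)) = of_nat (q choose i) * ((-1)^(l-i) * coeff Q (l-i))"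
      by (metis (no_types, lifting) mult.assoc mult.left_commute)
  qed
  also have "\<dots> = (\<Sum>i = max (l - m) 0 .. min q l. of_nat (q choose i) * ((-1)^(l-i) * coeff Q (l-i)))"
  proof (rule sum.mono_neutral_right)
    show "finite {..l}" by simp
    show "{max (l - m) 0..min q l} \<subseteq> {..l}" by auto
    show "\<forall>i\<in>{..l} - {max (l - m) 0..min q l}. of_nat (q choose i) * ((-1)^(l-i) * coeff Q (l-i)) = (0::complex)"
    proof
      fix i assume i: "i \<in> {..l} - {max (l - m) 0..min q l}"
      show "of_nat (q choose i) * ((-1)^(l-i) * coeff Q (l-i)) = (0::complex)"
      proof (cases "i > q")
        case True thus ?thesis by simp
      next
        case False
        hence "l - i > m" using i by auto
        hence "coeff Q (l-i) = 0" using dQ by (intro coeff_eq_0) simp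
        thus ?thesis by simp
      qed
    qed
  qed
  finally show ?thesis .
qed

lemma deg_prod_lin: "degree (\<Prod>a\<leftarrow>xs. [:1,-a:] :: complex poly) \<le> length xs"
proof (induction xs)
  case (Cons a xs)
  have "degree ([:1,-a:] * (\<Prod>a\<leftarrow>xs. [:1,-a:])) \<le> degree [:1,-a:] + degree (\<Prod>a\<leftarrow>xs. [:1,-a:] :: complex poly)"
    by (rule degree_mult_le)
  also have "\<dots> \<le> 1 + length xs" using Cons by (intro add_mono) auto
  finally show ?case by simp
qed simp

lemma poly0_prod_lin: "poly (\<Prod>a\<leftarrow>xs. [:1,-a:] :: complex poly) 0 = 1"
  by (induction xs) simp_all

lemma main_equiv:
  fixes r b q :: nat and z :: "complex mat"
  assumes q1: "1 \<le> q" and qr: "q < r" and z: "z \<in> carrier_mat r (r + b)"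
  shows "((\<forall>j<q. sing_vals z ! j = 1) \<and> sing_vals z ! q \<le> 1) \<longleftrightarrow>
     (\<forall>l\<in>{1..r}. jt_det_part l z z =
              (\<Sum>i = max (l - (r - q)) 0 .. min q l.
                 of_nat (q choose i) * jt_det_part (l - i) (Psi r b q z) (Psi r b q z)))"
proof -
  let ?ts = "sing_vals z"
  define ss where "ss = map (\<lambda>t. complex_of_real (t^2)) ?ts"
  note props = sing_vals_props[OF z]
  have len: "length ?ts = r" and sorted: "sorted_wrt (\<ge>) ?ts" and nn: "\<forall>t\<in>set ?ts. 0 \<le> t"
    and cp0: "char_poly (z * ctrans z) = (\<Prod>t\<leftarrow>?ts. [:- complex_of_real (t^2), 1:])"
    using props by auto
  have lss: "length ss = r" unfolding ss_def using len by simp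
  have cp: "char_poly (z * ctrans z) = (\<Prod>a\<leftarrow>ss. [:-a,1:])" unfolding ss_def cp0 by (simp add: o_def)
  define P where "P = (\<Prod>a\<leftarrow>ss. [:1,-a:] :: complex poly)"
  define P1 where "P1 = (\<Prod>a\<leftarrow>take q ss. [:1,-a:] :: complex poly)"
  define Q where "Q = (\<Prod>a\<leftarrow>drop q ss. [:1,-a:] :: complex poly)"
  define E where "E = ([:1,-1:]^q :: complex poly)"
  have PQ: "P = P1 * Q" unfolding P_def P1_def Q_def
    by (metis append_take_drop_id map_append prod_list.append)
  have jz: "jt_det_part l z z = (-1)^l * coeff P l" for l
    unfolding P_def by (rule jt_det_part_eq[OF z z cp lss])
  have jP: "jt_det_part k (Psi r b q z) (Psi r b q z) = (-1)^k * coeff Q k" for k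
    unfolding Q_def ss_def by (rule Psi_part[OF len]) (use qr in simp)
  have dQ: "degree Q \<le> r - q" unfolding Q_def using deg_prod_lin[of "drop q ss"] lss by simp
  have dP: "degree P \<le> r" unfolding P_def using deg_prod_lin[of ss] lss by simp
  have Q0: "Q \<noteq> 0" using poly0_prod_lin[of "drop q ss"] unfolding Q_def by auto
  have dE: "degree (E * Q) \<le> r"
  proof -
    have "degree (E * Q) \<le> degree E + degree Q" by (rule degree_mult_le)
    also have "degree E \<le> degree ([:1,-1:] :: complex poly) * q" unfolding E_def by (rule degree_power_le)
    finally show ?thesis using dQ qr by simp
  qed
  have "(\<forall>l\<in>{1..r}. jt_det_part l z z =
              (\<Sum>i = max (l - (r - q)) 0 .. min q l.
                 of_nat (q choose i) * jt_det_part (l - i) (Psi r b q z) (Psi r b q z)))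
     \<longleftrightarrow> (\<forall>l\<in>{1..r}. (-1)^l * coeff P l = (-1)^l * coeff (E * Q) l)"
  proof -
    have "\<And>l. l \<in> {1..r} \<Longrightarrow> (\<Sum>i = max (l - (r - q)) 0 .. min q l.
                 of_nat (q choose i) * jt_det_part (l - i) (Psi r b q z) (Psi r b q z)) = (-1)^l * coeff (E * Q) l"
      unfolding jP E_def using keyK[OF dQ] qr by simp
    thus ?thesis unfolding jz by simp
  qed
  also have "\<dots> \<longleftrightarrow> P = E * Q"
  proof
    assume H: "\<forall>l\<in>{1..r}. (-1)^l * coeff P l = (-1)^l * coeff (E * Q) l"
    show "P = E * Q"
    proof (rule poly_eqI)
      fix n
      show "coeff P n = coeff (E * Q) n"
      proof (cases "n = 0")
        case True
        have "poly P 0 = 1" unfolding P_def by (rule poly0_prod_lin)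
        moreover have "poly (E * Q) 0 = 1" unfolding E_def Q_def by (simp add: poly0_prod_lin)
        ultimately show ?thesis using True by (simp add: poly_0_coeff_0)
      next
        case False
        show ?thesis
        proof (cases "n \<le> r")
          case True
          with False H have "(-1)^n * coeff P n = (-1)^n * coeff (E * Q) n" by auto
          thus ?thesis by simp
        next
          case False
          thus ?thesis using dP dE by (simp add: coeff_eq_0)
        qed
      qed
    qed
  qed simp
  also have "\<dots> \<longleftrightarrow> P1 = E" unfolding PQ using Q0 by simp
  also have "\<dots> \<longleftrightarrow> (\<forall>j<q. ?ts ! j = 1)"
  proof
    assume H: "P1 = E"
    have "E = (\<Prod>a\<leftarrow>replicate q 1. [:1,-a:])" unfolding E_def by (simp add: prod_list_replicate)
    hence "(\<Prod>a\<leftarrow>take q ss. [:-a,1:]) = (\<Prod>a\<leftarrow>replicate q (1::complex). [:-a,1:])"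
      using H unfolding P1_def by (intro rev_eq) (use lss qr in auto)
    hence "mset (take q ss) = mset (replicate q 1)" by (rule lin_prod_mset)
    hence "set (take q ss) = set (replicate q (1::complex))" by (metis set_mset_mset)
    hence st: "set (take q ss) \<subseteq> {1}" by (simp add: set_replicate_conv_if)
    show "\<forall>j<q. ?ts ! j = 1"
    proof (intro allI impI)
      fix j assume j: "j < q"
      have "ss ! j \<in> set (take q ss)" using j lss qr by (metis in_set_conv_nth length_take min.absorb4 nth_take)
      hence "ss ! j = 1" using st by auto
      hence "complex_of_real ((?ts ! j)^2) = 1" unfolding ss_def using j qr len by simp
      hence "(?ts ! j)^2 = 1" by (metis of_real_eq_1_iff)
      moreover have "?ts ! j \<ge> 0" using nn j qr len by auto
      ultimately show "?ts ! j = 1" by (metis abs_of_nonneg power2_eq_1_iff abs_eq_iff one_neq_neg_one zero_le_one)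
    qed
  next
    assume H: "\<forall>j<q. ?ts ! j = 1"
    have "take q ss = replicate q 1"
      by (rule nth_equalityI) (use H lss qr len in \<open>auto simp: ss_def\<close>)
    thus "P1 = E" unfolding P1_def E_def by (simp add: prod_list_replicate)
  qed
  also have "\<dots> \<longleftrightarrow> ((\<forall>j<q. ?ts ! j = 1) \<and> ?ts ! q \<le> 1)"
  proof -
    have "?ts ! q \<le> ?ts ! (q - 1)" using sorted len qr q1
      by (metis diff_less less_imp_le_nat less_numeral_extra(1) order_less_le_trans sorted_wrt_nth_less)
    thus ?thesis using q1 by (metis diff_less less_numeral_extra(1) order_less_le_trans)
  qed
  finally show ?thesis by simp
qed

theorem theoremA2:
  fixes r b q :: nat
  assumes "1 \<le> q" and "q < r"
  shows "{z \<in> carrier_mat r (r + b).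
            (\<forall>j<q. sing_vals z ! j = 1) \<and> sing_vals z ! q \<le> 1}
       = {z \<in> carrier_mat r (r + b).
            \<forall>l\<in>{1..r}. jt_det_part l z z =
              (\<Sum>i = max (l - (r - q)) 0 .. min q l.
                 of_nat (q choose i) * jt_det_part (l - i) (Psi r b q z) (Psi r b q z))}"
  using main_equiv[OF assms] by blast

end
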